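(* Let $n\ge2$. Every connected component $C$ of $\widetilde P_0(S_n)$ is isomorphic to the subgraph of $P_0(\mathcal T(S_n))$ induced on the set $\mathcal T(C)$ of types of vertices of $C$ if and only if $2\le n\le 5$.
   Context: $\widetilde P_0(S_n)$: vertex set $\{[x]:x\in S_n\setminus\{\mathrm{id}\}\}$ with $[x]=\{y:\langle y\rangle=\langle x\rangle\}$, distinct $[x],[y]$ adjacent iff some representatives are one a positive power of the other. The type of $[\psi]$ is the partition $T_\psi$ of $n$ given by orbit lengths of $\langle\psi\rangle$. For a partition $T=[m_1^{t_1},\dots,m_k^{t_k}]$, $T^a=[(m_i/\gcd(a,m_i))^{t_i\gcd(a,m_i)}]_i$. $P_0(\mathcal T(S_n))$: vertices the partitions of $n$ other than $[1^n]$, distinct $T,T'$ adjacent iff one is a power of the other. *)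

theory Defs
  imports "HOL-Combinatorics.Permutations" "HOL-Library.Multiset"
begin

definition sym_grp :: "nat \<Rightarrow> (nat \<Rightarrow> nat) set" where
  "sym_grp n = {p. p permutes {..<n}}"

text \<open>Cyclic subgroup generated by a permutation (finite order, so nonnegative powers suffice).\<close>
definition cyc :: "(nat \<Rightarrow> nat) \<Rightarrow> (nat \<Rightarrow> nat) set" where
  "cyc p = {p ^^ k | k. True}"

definition pclass :: "nat \<Rightarrow> (nat \<Rightarrow> nat) \<Rightarrow> (nat \<Rightarrow> nat) set" where
  "pclass n x = {y \<in> sym_grp n. cyc y = cyc x}"

definition pg_verts :: "nat \<Rightarrow> (nat \<Rightarrow> nat) set set" where
  "pg_verts n = pclass n ` (sym_grp n - {id})"

definition pg_adj :: "(nat \<Rightarrow> nat) set \<Rightarrow> (nat \<Rightarrow> nat) set \<Rightarrow> bool" where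
  "pg_adj X Y \<longleftrightarrow> X \<noteq> Y \<and>
     (\<exists>a\<in>X. \<exists>b\<in>Y. \<exists>k::nat. k \<ge> 1 \<and> (a = b ^^ k \<or> b = a ^^ k))"

definition orbit_of :: "(nat \<Rightarrow> nat) \<Rightarrow> nat \<Rightarrow> nat set" where
  "orbit_of p i = {(p ^^ k) i | k. True}"

definition perm_type :: "nat \<Rightarrow> (nat \<Rightarrow> nat) \<Rightarrow> nat multiset" where
  "perm_type n p = image_mset card (mset_set (orbit_of p ` {..<n}))"

definition is_partition :: "nat \<Rightarrow> nat multiset \<Rightarrow> bool" where
  "is_partition n T \<longleftrightarrow> sum_mset T = n \<and> 0 \<notin># T"

definition part_pow :: "nat multiset \<Rightarrow> nat \<Rightarrow> nat multiset" where
  "part_pow T a = sum_mset (image_mset (\<lambda>m. replicate_mset (gcd a m) (m div gcd a m)) T)"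

definition type_verts :: "nat \<Rightarrow> nat multiset set" where
  "type_verts n = {T. is_partition n T \<and> T \<noteq> replicate_mset n 1}"

definition type_adj :: "nat multiset \<Rightarrow> nat multiset \<Rightarrow> bool" where
  "type_adj T T' \<longleftrightarrow> T \<noteq> T' \<and>
     (\<exists>a::nat. a \<ge> 1 \<and> (T' = part_pow T a \<or> T = part_pow T' a))"

definition types_of :: "nat \<Rightarrow> (nat \<Rightarrow> nat) set set \<Rightarrow> nat multiset set" where
  "types_of n C = {perm_type n x | x. x \<in> sym_grp n \<and> x \<noteq> id \<and> pclass n x \<in> C}"

definition graph_components :: "'a set \<Rightarrow> ('a \<Rightarrow> 'a \<Rightarrow> bool) \<Rightarrow> 'a set set" where
  "graph_components V E =
     {{y \<in> V. (x, y) \<in> {(u, v). u \<in> V \<and> v \<in> V \<and> E u v}\<^sup>*} | x. x \<in> V}"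

definition graph_iso :: "'a set \<Rightarrow> ('a \<Rightarrow> 'a \<Rightarrow> bool) \<Rightarrow> 'b set \<Rightarrow> ('b \<Rightarrow> 'b \<Rightarrow> bool) \<Rightarrow> bool" where
  "graph_iso V E W F \<longleftrightarrow>
     (\<exists>f. bij_betw f V W \<and> (\<forall>u\<in>V. \<forall>v\<in>V. E u v \<longleftrightarrow> F (f u) (f v)))"

end

theory Submission
  imports Defs "HOL-Combinatorics.Multiset_Permutations"
begin


lemma cyc_self: "x \<in> cyc x"
  unfolding cyc_def by (rule CollectI, rule exI[of _ 1]) simp

lemma id_in_cyc: "id \<in> cyc x"
  unfolding cyc_def by (rule CollectI, rule exI[of _ 0]) simp

lemma cyc_trans: "y \<in> cyc x \<Longrightarrow> cyc y \<subseteq> cyc x"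
  unfolding cyc_def by (auto simp: funpow_mult)

lemma cyc_eq_iff: "cyc x = cyc y \<longleftrightarrow> x \<in> cyc y \<and> y \<in> cyc x"
  using cyc_self cyc_trans by blast

lemma sym_pow: "x \<in> sym_grp n \<Longrightarrow> x ^^ k \<in> sym_grp n"
  unfolding sym_grp_def by (induction k) (auto intro: permutes_compose)

lemma cyc_sub: "x \<in> sym_grp n \<Longrightarrow> cyc x \<subseteq> sym_grp n"
  unfolding cyc_def using sym_pow by blast

lemma orbit_cyc: "orbit_of p i = (\<lambda>g. g i) ` cyc p"
  unfolding orbit_of_def cyc_def by auto

lemma perm_type_cyc: "cyc x = cyc y \<Longrightarrow> perm_type n x = perm_type n y"
  unfolding perm_type_def by (simp add: orbit_cyc)

lemma pclass_self: "x \<in> sym_grp n \<Longrightarrow> x \<in> pclass n x"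
  unfolding pclass_def by simp

lemma mem_pclass: "z \<in> pclass n x \<Longrightarrow> z \<in> sym_grp n \<and> cyc z = cyc x"
  unfolding pclass_def by simp

lemma pclass_eq: "x \<in> sym_grp n \<Longrightarrow> pclass n x = pclass n y \<longleftrightarrow> cyc x = cyc y"
  unfolding pclass_def by auto

lemma cyc_id: "cyc id = {id}"
  unfolding cyc_def by auto

lemma pg_adj_pclass:
  assumes "x \<in> sym_grp n" "y \<in> sym_grp n" "x \<noteq> id" "y \<noteq> id"
  shows "pg_adj (pclass n x) (pclass n y) \<longleftrightarrow> cyc x \<noteq> cyc y \<and> (x \<in> cyc y \<or> y \<in> cyc x)"
proof
  assume H: "pg_adj (pclass n x) (pclass n y)"
  hence ne: "cyc x \<noteq> cyc y" using assms pclass_eq unfolding pg_adj_def by blast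
  from H obtain a b k where ab: "a \<in> pclass n x" "b \<in> pclass n y" "a = b ^^ k \<or> b = a ^^ k"
    unfolding pg_adj_def by blast
  have ca: "cyc a = cyc x" and cb: "cyc b = cyc y" using ab mem_pclass by blast+
  from ab(3) have "x \<in> cyc y \<or> y \<in> cyc x"
  proof
    assume "a = b ^^ k"
    hence "a \<in> cyc b" unfolding cyc_def by blast
    hence "cyc a \<subseteq> cyc b" by (rule cyc_trans)
    thus ?thesis using ca cb cyc_self by blast
  next
    assume "b = a ^^ k"
    hence "b \<in> cyc a" unfolding cyc_def by blast
    hence "cyc b \<subseteq> cyc a" by (rule cyc_trans)
    thus ?thesis using ca cb cyc_self by blast
  qed
  with ne show "cyc x \<noteq> cyc y \<and> (x \<in> cyc y \<or> y \<in> cyc x)" by blast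
next
  assume H: "cyc x \<noteq> cyc y \<and> (x \<in> cyc y \<or> y \<in> cyc x)"
  have neq: "pclass n x \<noteq> pclass n y" using H assms pclass_eq by blast
  from H have "\<exists>k\<ge>1. x = y ^^ k \<or> y = x ^^ k"
  proof (elim conjE disjE)
    assume "x \<in> cyc y"
    then obtain k where k: "x = y ^^ k" unfolding cyc_def by blast
    with assms(3) have "k \<ge> 1" by (cases k) auto
    with k show ?thesis by blast
  next
    assume "y \<in> cyc x"
    then obtain k where k: "y = x ^^ k" unfolding cyc_def by blast
    with assms(4) have "k \<ge> 1" by (cases k) auto
    with k show ?thesis by blast
  qed
  then show "pg_adj (pclass n x) (pclass n y)"
    unfolding pg_adj_def using neq pclass_self assms by blast
qed




definition tyv :: "nat \<Rightarrow> (nat \<Rightarrow> nat) set \<Rightarrow> nat multiset" where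
  "tyv n X = perm_type n (SOME x. x \<in> X)"

lemma tyv_pclass: "y \<in> sym_grp n \<Longrightarrow> tyv n (pclass n y) = perm_type n y"
proof -
  assume y: "y \<in> sym_grp n"
  hence "\<exists>x. x \<in> pclass n y" using pclass_self by blast
  hence "(SOME x. x \<in> pclass n y) \<in> pclass n y" by (rule someI_ex)
  hence "cyc (SOME x. x \<in> pclass n y) = cyc y" using mem_pclass by blast
  thus ?thesis unfolding tyv_def by (rule perm_type_cyc)
qed

lemma types_of_image: "C \<subseteq> pg_verts n \<Longrightarrow> types_of n C = tyv n ` C"
proof
  assume C: "C \<subseteq> pg_verts n"
  show "types_of n C \<subseteq> tyv n ` C"
    unfolding types_of_def using tyv_pclass by force
  show "tyv n ` C \<subseteq> types_of n C"
  proof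
    fix T assume "T \<in> tyv n ` C"
    then obtain X where X: "X \<in> C" "T = tyv n X" by blast
    then obtain y where y: "y \<in> sym_grp n" "y \<noteq> id" "X = pclass n y"
      using C unfolding pg_verts_def by blast
    thus "T \<in> types_of n C" unfolding types_of_def using X tyv_pclass by blast
  qed
qed

lemma pg_verts_iff: "X \<in> pg_verts n \<longleftrightarrow> (\<exists>x. x \<in> sym_grp n \<and> x \<noteq> id \<and> X = pclass n x)"
  unfolding pg_verts_def by blast

lemma abstract_iso:
  fixes G :: "(nat \<Rightarrow> nat) \<Rightarrow> (nat \<Rightarrow> nat)" and n :: nat
  assumes A: "\<And>x. x \<in> sym_grp n \<Longrightarrow> x \<noteq> id \<Longrightarrow> G x \<in> sym_grp n \<and> G (G x) = G x \<and> x \<in> cyc (G x)"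
  and B: "\<And>g y. g \<in> sym_grp n \<Longrightarrow> g \<noteq> id \<Longrightarrow> G g = g \<Longrightarrow> y \<in> cyc g \<Longrightarrow> y \<noteq> id \<Longrightarrow> cyc (G y) = cyc g"
  and C: "\<And>g y z. g \<in> sym_grp n \<Longrightarrow> g \<noteq> id \<Longrightarrow> G g = g \<Longrightarrow> y \<in> cyc g \<Longrightarrow> y \<noteq> id \<Longrightarrow>
            z \<in> cyc g \<Longrightarrow> z \<noteq> id \<Longrightarrow> cyc y \<noteq> cyc z \<Longrightarrow>
            perm_type n y \<noteq> perm_type n z \<and> (type_adj (perm_type n y) (perm_type n z) \<longleftrightarrow> (y \<in> cyc z \<or> z \<in> cyc y))"
  shows "\<forall>C \<in> graph_components (pg_verts n) pg_adj. graph_iso C pg_adj (types_of n C) type_adj"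
proof
  let ?S = "sym_grp n"
  let ?V = "pg_verts n"
  let ?R = "{(u, v). u \<in> ?V \<and> v \<in> ?V \<and> pg_adj u v}"
  define key where "key x = cyc (G x)" for x
  have Gnid: "G x \<noteq> id" if "x \<in> ?S" "x \<noteq> id" for x
  proof
    assume "G x = id"
    hence "x \<in> cyc id" using A[OF that] by simp
    thus False using cyc_id that(2) by simp
  qed
  have K1: "key y = key x" if "x \<in> ?S" "x \<noteq> id" "y \<in> cyc x" "y \<noteq> id" for x y
  proof -
    have g: "G x \<in> ?S" "G (G x) = G x" "x \<in> cyc (G x)" using A[OF that(1,2)] by auto
    have "y \<in> cyc (G x)" using cyc_trans[OF g(3)] that(3) by blast
    from B[OF g(1) Gnid[OF that(1,2)] g(2) this that(4)] show ?thesis unfolding key_def .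
  qed
  have Kadj: "key x = key y" if "x \<in> ?S" "x \<noteq> id" "y \<in> ?S" "y \<noteq> id"
      "pg_adj (pclass n x) (pclass n y)" for x y
    using pg_adj_pclass[OF that(1,3,2,4)] that K1 by metis
  have Vp: "pclass n x \<in> ?V" if "x \<in> ?S" "x \<noteq> id" for x
    using that pg_verts_iff by blast
  have step: "(pclass n x, pclass n y) \<in> ?R\<^sup>*" if "x \<in> ?S" "x \<noteq> id" "y \<in> ?S" "y \<noteq> id" "y \<in> cyc x" for x y
  proof (cases "cyc x = cyc y")
    case True
    then have "pclass n x = pclass n y" using pclass_eq[OF that(1)] by blast
    then show ?thesis by simp
  next
    case False
    hence "pg_adj (pclass n x) (pclass n y)" using pg_adj_pclass[OF that(1,3,2,4)] that(5) by blast
    hence "(pclass n x, pclass n y) \<in> ?R" using Vp that by blast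
    thus ?thesis by blast
  qed
  have step': "(pclass n y, pclass n x) \<in> ?R\<^sup>*" if "x \<in> ?S" "x \<noteq> id" "y \<in> ?S" "y \<noteq> id" "y \<in> cyc x" for x y
  proof (cases "cyc x = cyc y")
    case True
    then have "pclass n x = pclass n y" using pclass_eq[OF that(1)] by blast
    then show ?thesis by simp
  next
    case False
    hence "pg_adj (pclass n y) (pclass n x)" using pg_adj_pclass[OF that(3,1,4,2)] that(5) by blast
    hence "(pclass n y, pclass n x) \<in> ?R" using Vp that by blast
    thus ?thesis by blast
  qed
  fix Co assume "Co \<in> graph_components ?V pg_adj"
  then obtain X0 where X0: "X0 \<in> ?V" and Co: "Co = {Y \<in> ?V. (X0, Y) \<in> ?R\<^sup>*}"
    unfolding graph_components_def by blast
  from X0 obtain x0 where x0: "x0 \<in> ?S" "x0 \<noteq> id" "X0 = pclass n x0" using pg_verts_iff by blast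
  have fwd: "\<exists>y. y \<in> ?S \<and> y \<noteq> id \<and> Y = pclass n y \<and> key y = key x0" if "(X0, Y) \<in> ?R\<^sup>*" for Y
    using that
  proof (induction rule: rtrancl_induct)
    case base
    then show ?case using x0 by blast
  next
    case (step Y Z)
    then obtain y where y: "y \<in> ?S" "y \<noteq> id" "Y = pclass n y" "key y = key x0" by blast
    from step(2) obtain z where z: "z \<in> ?S" "z \<noteq> id" "Z = pclass n z" using pg_verts_iff by blast
    from step(2) have "pg_adj (pclass n y) (pclass n z)" using y z by simp
    hence "key y = key z" using Kadj y z by blast
    thus ?case using y z by metis
  qed
  have g0: "G x0 \<in> ?S" "G (G x0) = G x0" "x0 \<in> cyc (G x0)" "G x0 \<noteq> id"
    using A[OF x0(1,2)] Gnid[OF x0(1,2)] by auto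
  have bwd: "(X0, pclass n y) \<in> ?R\<^sup>*" if "y \<in> ?S" "y \<noteq> id" "key y = key x0" for y
  proof -
    have gy: "G y \<in> ?S" "y \<in> cyc (G y)" "G y \<noteq> id" using A[OF that(1,2)] Gnid[OF that(1,2)] by auto
    have e1: "pclass n (G y) = pclass n (G x0)" using pclass_eq[OF gy(1), of "G x0"] that(3) unfolding key_def by blast
    have e2: "(pclass n (G y), pclass n y) \<in> ?R\<^sup>*" using step[OF gy(1) gy(3) that(1,2) gy(2)] .
    have e3: "(X0, pclass n (G x0)) \<in> ?R\<^sup>*" using step'[OF g0(1) g0(4) x0(1,2) g0(3)] x0(3) by simp
    have "(X0, pclass n (G y)) \<in> ?R\<^sup>*" using e3 e1 by simp
    from rtrancl_trans[OF this e2] show ?thesis .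
  qed
  have memCo: "Y \<in> Co \<longleftrightarrow> (\<exists>y. y \<in> ?S \<and> y \<noteq> id \<and> Y = pclass n y \<and> key y = key x0)" for Y
    using fwd bwd Vp unfolding Co by blast
  have incyc: "y \<in> cyc (G x0)" if "y \<in> ?S" "y \<noteq> id" "key y = key x0" for y
    using A[OF that(1,2)] that(3) unfolding key_def by blast
  have CoV: "Co \<subseteq> ?V" unfolding Co by blast
  show "graph_iso Co pg_adj (types_of n Co) type_adj"
    unfolding graph_iso_def types_of_image[OF CoV]
  proof (intro exI conjI)
    show "bij_betw (tyv n) Co (tyv n ` Co)"
    proof (rule inj_on_imp_bij_betw, rule inj_onI)
      fix Y Z assume "Y \<in> Co" "Z \<in> Co" and eq: "tyv n Y = tyv n Z"
      then obtain y z where y: "y \<in> ?S" "y \<noteq> id" "Y = pclass n y" "key y = key x0"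
        and z: "z \<in> ?S" "z \<noteq> id" "Z = pclass n z" "key z = key x0" using memCo by metis
      have "perm_type n y = perm_type n z" using eq y z tyv_pclass by metis
      hence "cyc y = cyc z" using C[OF g0(1) g0(4) g0(2) incyc[OF y(1,2,4)] y(2) incyc[OF z(1,2,4)] z(2)] by blast
      thus "Y = Z" using y z pclass_eq by metis
    qed
    show "\<forall>u\<in>Co. \<forall>v\<in>Co. pg_adj u v = type_adj (tyv n u) (tyv n v)"
    proof (intro ballI)
      fix Y Z assume "Y \<in> Co" "Z \<in> Co"
      then obtain y z where y: "y \<in> ?S" "y \<noteq> id" "Y = pclass n y" "key y = key x0"
        and z: "z \<in> ?S" "z \<noteq> id" "Z = pclass n z" "key z = key x0" using memCo by metis
      show "pg_adj Y Z = type_adj (tyv n Y) (tyv n Z)"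
      proof (cases "cyc y = cyc z")
        case True
        then have "Y = Z" using y z pclass_eq by metis
        then show ?thesis unfolding pg_adj_def type_adj_def by simp
      next
        case False
        note CC = C[OF g0(1) g0(4) g0(2) incyc[OF y(1,2,4)] y(2) incyc[OF z(1,2,4)] z(2) False]
        show ?thesis using CC pg_adj_pclass[OF y(1) z(1) y(2) z(2)] False y z tyv_pclass by metis
      qed
    qed
  qed
qed




definition lc :: "nat list \<Rightarrow> nat list \<Rightarrow> nat list" where "lc l m = map (nth l) m"

fun cg :: "nat list \<Rightarrow> nat list \<Rightarrow> nat \<Rightarrow> nat list list option" where
  "cg l cur 0 = None"
| "cg l cur (Suc f) = (if cur = [0..<length l] then Some [] else map_option (Cons cur) (cg l (lc l cur) f))"

definition cyclist :: "nat list \<Rightarrow> nat list list" where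
  "cyclist l = (case cg l l 7 of Some L \<Rightarrow> [0..<length l] # L | None \<Rightarrow> [])"

definition fn :: "nat list \<Rightarrow> nat \<Rightarrow> nat" where
  "fn l i = (if i < length l then l ! i else i)"

definition valid :: "nat \<Rightarrow> nat list \<Rightarrow> bool" where
  "valid n l \<longleftrightarrow> l \<in> set (permutations_of_set_list [0..<n])"

lemma valid_iff: "valid n l \<longleftrightarrow> set l = {..<n} \<and> distinct l"
proof -
  have "set (permutations_of_set_list [0..<n]) = permutations_of_set {..<n}"
    using permutations_of_list[of "[0..<n]"] by (simp add: lessThan_atLeast0)
  thus ?thesis unfolding valid_def permutations_of_set_def by simp
qed

lemma valid_len: "valid n l \<Longrightarrow> length l = n"
  by (metis valid_iff card_lessThan distinct_card)

lemma valid_nth: "valid n l \<Longrightarrow> i < n \<Longrightarrow> l ! i < n"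
  by (metis valid_iff valid_len lessThan_iff nth_mem)

lemma fn_perm: assumes "valid n l" shows "fn l \<in> sym_grp n"
proof -
  have len: "length l = n" using assms valid_len by blast
  have "bij_betw (fn l) {..<n} {..<n}"
  proof (rule bij_betw_imageI)
    show "inj_on (fn l) {..<n}"
      using assms len unfolding valid_iff fn_def inj_on_def by (simp add: nth_eq_iff_index_eq)
    have "fn l ` {..<n} = (\<lambda>i. l ! i) ` {..<length l}" using len unfolding fn_def by auto
    also have "\<dots> = set l" by (auto simp: set_conv_nth)
    finally show "fn l ` {..<n} = {..<n}" using assms valid_iff by simp
  qed
  moreover have "fn l x = x" if "x \<notin> {..<n}" for x using that len unfolding fn_def by simp
  ultimately show ?thesis unfolding sym_grp_def by (auto intro: bij_imp_permutes)
qed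

lemma tl_valid: assumes "x \<in> sym_grp n" shows "valid n (map x [0..<n])" "fn (map x [0..<n]) = x"
proof -
  have p: "x permutes {..<n}" using assms unfolding sym_grp_def by simp
  show "valid n (map x [0..<n])" unfolding valid_iff
    using permutes_image[OF p] permutes_inj_on[OF p]
    by (simp add: distinct_map lessThan_atLeast0)
  show "fn (map x [0..<n]) = x"
    using permutes_not_in[OF p] by (auto simp: fn_def fun_eq_iff)
qed

lemma fn_inj: assumes "valid n l" "valid n m" "fn l = fn m" shows "l = m"
proof (rule nth_equalityI)
  show "length l = length m" using assms valid_len by metis
  fix i assume "i < length l"
  thus "l ! i = m ! i" using assms(3) \<open>length l = length m\<close> unfolding fn_def by (metis)
qed

lemma tl_fn: "valid n l \<Longrightarrow> map (fn l) [0..<n] = l"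
  by (rule nth_equalityI) (auto simp: valid_len fn_def)

lemma fn_id: "fn [0..<n] = id"
  by (auto simp: fn_def fun_eq_iff)

lemma lc_valid: assumes "valid n l" "valid n m"
  shows "valid n (lc l m)" "fn (lc l m) = fn l \<circ> fn m"
proof -
  have len: "length l = n" "length m = n" using assms valid_len by auto
  have sm: "set m = {..<n}" "distinct m" "set l = {..<n}" "distinct l" using assms valid_iff by auto
  have inj: "inj_on (nth l) {..<n}" using sm len by (simp add: inj_on_def nth_eq_iff_index_eq)
  have "nth l ` {..<n} = set l" using len by (auto simp: set_conv_nth)
  thus "valid n (lc l m)" unfolding valid_iff lc_def using sm inj by (simp add: distinct_map)
  show "fn (lc l m) = fn l \<circ> fn m"
  proof
    fix i show "fn (lc l m) i = (fn l \<circ> fn m) i"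
      using valid_nth[OF assms(2)] len unfolding fn_def lc_def by auto
  qed
qed

lemma funpow_comm_o: "f ^^ k \<circ> f = f \<circ> f ^^ k"
  by (metis funpow_Suc_right funpow.simps(2))

lemma cg_sem:
  assumes "valid n l" "valid n cur" "cg l cur f = Some L"
  shows "(\<forall>q\<in>set L. valid n q) \<and> (\<exists>m. map fn L = map (\<lambda>k. (fn l ^^ k) \<circ> fn cur) [0..<m] \<and> (fn l ^^ m) \<circ> fn cur = id)"
  using assms(2,3)
proof (induction f arbitrary: cur L)
  case 0
  then show ?case by simp
next
  case (Suc f)
  have len: "length l = n" using assms(1) valid_len by blast
  show ?case
  proof (cases "cur = [0..<n]")
    case True
    then have "L = []" using Suc.prems len by simp
    then show ?thesis using True fn_id by (intro conjI exI[of _ 0]) auto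
  next
    case False
    then obtain L' where L': "cg l (lc l cur) f = Some L'" "L = cur # L'" using Suc.prems len by auto
    have v: "valid n (lc l cur)" "fn (lc l cur) = fn l \<circ> fn cur" using lc_valid[OF assms(1) Suc.prems(1)] by auto
    from Suc.IH[OF v(1) L'(1)] obtain m where
      m: "\<forall>q\<in>set L'. valid n q" "map fn L' = map (\<lambda>k. (fn l ^^ k) \<circ> fn (lc l cur)) [0..<m]"
         "(fn l ^^ m) \<circ> fn (lc l cur) = id" by blast
    have "map fn L = map (\<lambda>k. (fn l ^^ k) \<circ> fn cur) [0..<Suc m]"
      using L'(2) m(2) v(2) by (simp add: map_upt_Suc funpow_Suc_right o_assoc funpow_comm_o del: upt_Suc)
    moreover have "(fn l ^^ Suc m) \<circ> fn cur = id" using m(3) v(2) by (simp add: funpow_Suc_right o_assoc funpow_comm_o)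
    moreover have "\<forall>q\<in>set L. valid n q" using m(1) L'(2) Suc.prems(1) by simp
    ultimately show ?thesis by blast
  qed
qed

lemma cyc_fin: assumes "f ^^ M = id" "M > 0" shows "cyc f = {f ^^ k | k. k < M}"
proof -
  have "f ^^ k = f ^^ (k mod M)" for k
  proof -
    have "f ^^ k = f ^^ (M * (k div M) + k mod M)" by simp
    also have "\<dots> = f ^^ (M * (k div M)) \<circ> f ^^ (k mod M)" by (rule funpow_add)
    also have "\<dots> = (f ^^ M) ^^ (k div M) \<circ> f ^^ (k mod M)" by (simp only: funpow_mult)
    also have "\<dots> = f ^^ (k mod M)" using assms(1) by simp
    finally show ?thesis .
  qed
  thus ?thesis unfolding cyc_def using assms(2) by (metis (no_types, lifting) mod_less_divisor)
qed

lemma cyclist_sem: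
  assumes "valid n l" "cg l l 7 \<noteq> None"
  shows "\<forall>q\<in>set (cyclist l). valid n q"
    and "\<exists>M>0. map fn (cyclist l) = map (\<lambda>k. fn l ^^ k) [0..<M] \<and> fn l ^^ M = id"
proof -
  obtain L where L: "cg l l 7 = Some L" using assms(2) by blast
  have len: "length l = n" using assms(1) valid_len by blast
  have cl: "cyclist l = [0..<n] # L" using L len unfolding cyclist_def by simp
  from cg_sem[OF assms(1) assms(1) L] obtain m where
    m: "\<forall>q\<in>set L. valid n q" "map fn L = map (\<lambda>k. (fn l ^^ k) \<circ> fn l) [0..<m]" "(fn l ^^ m) \<circ> fn l = id"
    by blast
  have vid: "valid n [0..<n]" unfolding valid_iff by (simp add: lessThan_atLeast0)
  show "\<forall>q\<in>set (cyclist l). valid n q" using cl m(1) vid by simp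
  have "map fn (cyclist l) = map (\<lambda>k. fn l ^^ k) [0..<Suc m]"
    using cl m(2) fn_id by (simp add: map_upt_Suc funpow_Suc_right funpow_comm_o del: upt_Suc)
  moreover have "fn l ^^ Suc m = id" using m(3) by (simp add: funpow_Suc_right funpow_comm_o)
  ultimately show "\<exists>M>0. map fn (cyclist l) = map (\<lambda>k. fn l ^^ k) [0..<M] \<and> fn l ^^ M = id" by blast
qed

lemma cyclist_cyc:
  assumes "valid n l" "cg l l 7 \<noteq> None"
  shows "fn ` set (cyclist l) = cyc (fn l)"
proof -
  obtain M where M: "M > 0" "map fn (cyclist l) = map (\<lambda>k. fn l ^^ k) [0..<M]" "fn l ^^ M = id"
    using cyclist_sem(2)[OF assms] by blast
  have "fn ` set (cyclist l) = set (map fn (cyclist l))" by simp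
  also have "\<dots> = {fn l ^^ k | k. k < M}" using M(2) by auto
  also have "\<dots> = cyc (fn l)" using cyc_fin[OF M(3,1)] by simp
  finally show ?thesis .
qed

lemma mem_cyc_list:
  assumes "valid n l" "cg l l 7 \<noteq> None" "valid n q"
  shows "fn q \<in> cyc (fn l) \<longleftrightarrow> q \<in> set (cyclist l)"
  using cyclist_cyc[OF assms(1,2)] cyclist_sem(1)[OF assms(1,2)] fn_inj assms(3) by blast

lemma cyclist_nth:
  assumes "valid n l" "cg l l 7 \<noteq> None" "k < length (cyclist l)"
  shows "fn (cyclist l ! k) = fn l ^^ k"
proof -
  obtain M where M: "map fn (cyclist l) = map (\<lambda>k. fn l ^^ k) [0..<M]"
    using cyclist_sem(2)[OF assms(1,2)] by blast
  hence "length (cyclist l) = M" by (metis length_map length_upt minus_nat.diff_0)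
  have "fn (cyclist l ! k) = map fn (cyclist l) ! k" using assms(3) by simp
  also have "\<dots> = fn l ^^ k" using M assms(3) \<open>length (cyclist l) = M\<close> by simp
  finally show ?thesis .
qed




definition orbl :: "nat list list \<Rightarrow> nat \<Rightarrow> nat list" where
  "orbl C i = sort (remdups (map (\<lambda>q. q!i) C))"

definition typel :: "nat list \<Rightarrow> nat list" where
  "typel l = sort (map length (remdups (map (orbl (cyclist l)) [0..<length l])))"

definition ppl :: "nat list \<Rightarrow> nat \<Rightarrow> nat list" where
  "ppl A a = concat (map (\<lambda>m. replicate (gcd a m) (m div gcd a m)) A)"

fun idxof :: "'a \<Rightarrow> 'a list \<Rightarrow> nat" where
  "idxof x [] = 0" | "idxof x (y#ys) = (if x = y then 0 else Suc (idxof x ys))"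

definition divcover :: "nat list \<Rightarrow> nat list \<Rightarrow> bool" where
  "divcover A B = (\<forall>p\<in>set B. \<exists>q\<in>set A. p dvd q)"

lemma idxof: "x \<in> set xs \<Longrightarrow> idxof x xs < length xs \<and> xs ! idxof x xs = x"
  by (induction xs) auto

lemma ptype_list:
  assumes "valid n l" "cg l l 7 \<noteq> None"
  shows "perm_type n (fn l) = mset (typel l)"
proof -
  let ?C = "cyclist l"
  define xs where "xs = map (orbl ?C) [0..<n]"
  have len: "length l = n" using assms(1) valid_len by blast
  have vq: "\<forall>q\<in>set ?C. valid n q" using cyclist_sem(1)[OF assms] .
  have orb: "orbit_of (fn l) i = set (orbl ?C i)" if "i < n" for i
  proof -
    have "orbit_of (fn l) i = (\<lambda>g. g i) ` fn ` set ?C" using cyclist_cyc[OF assms] orbit_cyc by simp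
    also have "\<dots> = (\<lambda>q. q ! i) ` set ?C"
    proof -
      have "fn q i = q ! i" if "q \<in> set ?C" for q using vq that \<open>i < n\<close> valid_len unfolding fn_def by metis
      thus ?thesis by (auto simp: image_image)
    qed
    finally show ?thesis unfolding orbl_def by simp
  qed
  have O: "orbit_of (fn l) ` {..<n} = set ` set xs"
    unfolding xs_def using orb by (auto simp: image_image)
  have inj: "inj_on set (set xs)"
    unfolding xs_def orbl_def by (auto intro!: inj_onI intro: sorted_distinct_set_unique)
  have "perm_type n (fn l) = image_mset card (mset_set (set ` set xs))"
    unfolding perm_type_def O ..
  also have "\<dots> = image_mset card (image_mset set (mset_set (set xs)))"
    using image_mset_mset_set[OF inj] by simp
  also have "mset_set (set xs) = mset (remdups xs)"
    by (metis distinct_remdups mset_set_set set_remdups)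
  also have "image_mset card (image_mset set (mset (remdups xs))) = mset (map (\<lambda>q. card (set q)) (remdups xs))"
    by (simp add: image_mset.compositionality o_def)
  also have "map (\<lambda>q. card (set q)) (remdups xs) = map length (remdups xs)"
  proof (rule map_cong[OF refl])
    fix q assume "q \<in> set (remdups xs)"
    hence "distinct q" unfolding xs_def orbl_def by auto
    thus "card (set q) = length q" by (rule distinct_card)
  qed
  also have "mset (map length (remdups xs)) = mset (typel l)"
    unfolding typel_def xs_def len by simp
  finally show ?thesis .
qed

lemma part_pow_mset: "part_pow (mset A) a = mset (ppl A a)"
  unfolding part_pow_def ppl_def by (induction A) auto

lemma divcover_nec: assumes "mset B = part_pow (mset A) a" shows "divcover A B"
  unfolding divcover_def
proof
  fix p assume "p \<in> set B"
  hence "p \<in> set (ppl A a)" using assms part_pow_mset by (metis set_mset_mset)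
  then obtain m where m: "m \<in> set A" "p = m div gcd a m" unfolding ppl_def
    by (auto split: if_splits)
  have "p dvd m" unfolding m(2) by (metis dvd_div_mult_self gcd_dvd2 dvd_triv_left)
  thus "\<exists>q\<in>set A. p dvd q" using m(1) by blast
qed

lemma sorted_mset_eq: "sorted xs \<Longrightarrow> sorted ys \<Longrightarrow> mset xs = mset ys \<Longrightarrow> xs = ys"
  by (metis properties_for_sort)

lemma sort_eq_mset: "sort xs = sort ys \<Longrightarrow> mset xs = mset ys"
  by (metis mset_sort)




definition samecyc where "samecyc a b = (a \<in> set (cyclist b) \<and> b \<in> set (cyclist a))"

definition chkpair :: "nat list \<times> nat list list \<times> nat list \<Rightarrow> nat list \<times> nat list list \<times> nat list \<Rightarrow> bool" where
  "chkpair Y Z = (case Y of (y,cy,ty) \<Rightarrow> case Z of (z,cz,tz) \<Rightarrow>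
     (if y \<in> set cz \<and> z \<in> set cy then True else ty \<noteq> tz \<and>
       (if y \<in> set cz then sort ty = sort (ppl tz (idxof y cz))
        else if z \<in> set cy then sort tz = sort (ppl ty (idxof z cy))
        else \<not> divcover ty tz \<and> \<not> divcover tz ty)))"

definition chkg :: "(nat list \<times> nat list list \<times> nat list) list \<Rightarrow> bool" where
  "chkg D = list_all (\<lambda>Y. list_all (chkpair Y) D) D"

definition dat :: "nat list \<Rightarrow> (nat list \<times> nat list list \<times> nat list) list" where
  "dat g = map (\<lambda>q. (q, cyclist q, typel q)) (filter (\<lambda>q. q \<noteq> [0..<length g]) (cyclist g))"

definition Gl :: "nat list \<Rightarrow> nat list" where
  "Gl l = (let mv = filter (\<lambda>i. l!i \<noteq> i) [0..<length l]; fx = filter (\<lambda>i. l!i = i) [0..<length l] in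
     if length mv = 2 \<and> length fx = 3 then l[fx!0 := fx!1, fx!1 := fx!2, fx!2 := fx!0]
     else if length mv = 3 \<and> length fx = 2 then l[fx!0 := fx!1, fx!1 := fx!0]
     else if length mv = 4 \<and> lc l l = [0..<length l] then
        (let a = mv!0; b = l!a; c = hd (filter (\<lambda>i. i \<noteq> a \<and> i \<noteq> b) mv); d = l!c in l[a:=c, c:=b, b:=d, d:=a])
     else l)"

definition checkA :: "nat \<Rightarrow> bool" where
  "checkA n = list_all (\<lambda>l. cg l l 7 \<noteq> None \<and> (l = [0..<n] \<or>
      (distinct (Gl l) \<and> set (Gl l) = set [0..<n] \<and> Gl (Gl l) = Gl l \<and> l \<in> set (cyclist (Gl l)))))
    (permutations_of_set_list [0..<n])"

definition checkB :: "nat \<Rightarrow> bool" where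
  "checkB n = list_all (\<lambda>g. g = [0..<n] \<or> Gl g \<noteq> g \<or>
      list_all (\<lambda>y. y = [0..<n] \<or> samecyc (Gl y) g) (cyclist g)) (permutations_of_set_list [0..<n])"

definition checkC :: "nat \<Rightarrow> bool" where
  "checkC n = list_all (\<lambda>g. g = [0..<n] \<or> Gl g \<noteq> g \<or> chkg (dat g)) (permutations_of_set_list [0..<n])"

lemma valid_id: "valid n [0..<n]"
  unfolding valid_iff by (simp add: lessThan_atLeast0)

lemma fn_nid: "valid n l \<Longrightarrow> l \<noteq> [0..<n] \<longleftrightarrow> fn l \<noteq> id"
  using fn_inj[OF _ valid_id] fn_id by metis

lemma cyclist0: "valid n l \<Longrightarrow> cg l l 7 \<noteq> None \<Longrightarrow> cyclist l ! 0 = [0..<n]"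
  unfolding cyclist_def using valid_len by (auto split: option.splits)

lemma per_n:
  assumes cA: "checkA n" and cB: "checkB n" and cC: "checkC n"
  shows "\<forall>C \<in> graph_components (pg_verts n) pg_adj. graph_iso C pg_adj (types_of n C) type_adj"
proof -
  let ?P = "permutations_of_set_list [0..<n]"
  let ?S = "sym_grp n"
  have vP: "valid n l \<longleftrightarrow> l \<in> set ?P" for l unfolding valid_def ..
  have Acg: "cg l l 7 \<noteq> None" if "valid n l" for l using cA that vP unfolding checkA_def list_all_iff by blast
  have AG: "valid n (Gl l) \<and> Gl (Gl l) = Gl l \<and> l \<in> set (cyclist (Gl l))"
    if "valid n l" "l \<noteq> [0..<n]" for l
  proof -
    have "distinct (Gl l) \<and> set (Gl l) = set [0..<n] \<and> Gl (Gl l) = Gl l \<and> l \<in> set (cyclist (Gl l))"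
      using cA that vP unfolding checkA_def list_all_iff by blast
    thus ?thesis unfolding valid_iff by (simp add: lessThan_atLeast0)
  qed
  define G where "G x = fn (Gl (map x [0..<n]))" for x
  have Gfn: "G (fn l) = fn (Gl l)" if "valid n l" for l unfolding G_def tl_fn[OF that] ..
  have repr: "\<exists>l. valid n l \<and> x = fn l \<and> l \<noteq> [0..<n]" if "x \<in> ?S" "x \<noteq> id" for x
    using tl_valid[OF that(1)] fn_nid that(2) by metis
  have fixG: "Gl m = m" if "valid n m" "m \<noteq> [0..<n]" "G (fn m) = fn m" for m
    using fn_inj[of n "Gl m" m] AG[OF that(1,2)] that Gfn by metis
  have incyc: "\<exists>q. valid n q \<and> y = fn q \<and> q \<in> set (cyclist m) \<and> q \<noteq> [0..<n]"
    if "valid n m" "y \<in> cyc (fn m)" "y \<noteq> id" for m y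
  proof -
    from that(2) cyclist_cyc[OF that(1) Acg[OF that(1)]] obtain q where q: "q \<in> set (cyclist m)" "y = fn q" by blast
    have "valid n q" using cyclist_sem(1)[OF that(1) Acg[OF that(1)]] q by blast
    thus ?thesis using q that(3) fn_id by blast
  qed
  have cyc_iff: "fn a \<in> cyc (fn b) \<longleftrightarrow> a \<in> set (cyclist b)" if "valid n a" "valid n b" for a b
    using mem_cyc_list[OF that(2) Acg[OF that(2)] that(1)] .
  show ?thesis
  proof (rule abstract_iso[where G = G])
    fix x assume x: "x \<in> ?S" "x \<noteq> id"
    then obtain l where l: "valid n l" "x = fn l" "l \<noteq> [0..<n]" using repr by blast
    note a = AG[OF l(1,3)]
    show "G x \<in> ?S \<and> G (G x) = G x \<and> x \<in> cyc (G x)"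
      using a l Gfn fn_perm cyc_iff by metis
  next
    fix g y assume g: "g \<in> ?S" "g \<noteq> id" "G g = g" and y: "y \<in> cyc g" "y \<noteq> id"
    then obtain m where m: "valid n m" "g = fn m" "m \<noteq> [0..<n]" using repr by blast
    have Gm: "Gl m = m" using fixG m g by blast
    obtain q where q: "valid n q" "y = fn q" "q \<in> set (cyclist m)" "q \<noteq> [0..<n]" using incyc m y by blast
    have "samecyc (Gl q) m" using cB vP m Gm q unfolding checkB_def list_all_iff by blast
    moreover have vq: "valid n (Gl q)" using AG q by blast
    ultimately have "fn (Gl q) \<in> cyc (fn m)" "fn m \<in> cyc (fn (Gl q))"
      unfolding samecyc_def using cyc_iff m(1) by blast+
    thus "cyc (G y) = cyc g" using cyc_eq_iff q Gfn m by metis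
  next
    fix g y z assume g: "g \<in> ?S" "g \<noteq> id" "G g = g" and y: "y \<in> cyc g" "y \<noteq> id"
      and z: "z \<in> cyc g" "z \<noteq> id" and ne: "cyc y \<noteq> cyc z"
    then obtain m where m: "valid n m" "g = fn m" "m \<noteq> [0..<n]" using repr by blast
    have Gm: "Gl m = m" using fixG m g by blast
    obtain q1 where q1: "valid n q1" "y = fn q1" "q1 \<in> set (cyclist m)" "q1 \<noteq> [0..<n]" using incyc m y by blast
    obtain q2 where q2: "valid n q2" "z = fn q2" "q2 \<in> set (cyclist m)" "q2 \<noteq> [0..<n]" using incyc m z by blast
    have lenm: "length m = n" using m valid_len by blast
    have "chkg (dat m)" using cC vP m Gm unfolding checkC_def list_all_iff by blast
    moreover have "(q1, cyclist q1, typel q1) \<in> set (dat m)" "(q2, cyclist q2, typel q2) \<in> set (dat m)"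
      unfolding dat_def using q1 q2 lenm by auto
    ultimately have cp: "chkpair (q1, cyclist q1, typel q1) (q2, cyclist q2, typel q2)"
      unfolding chkg_def list_all_iff by blast
    have i12: "y \<in> cyc z \<longleftrightarrow> q1 \<in> set (cyclist q2)" using cyc_iff q1 q2 by blast
    have i21: "z \<in> cyc y \<longleftrightarrow> q2 \<in> set (cyclist q1)" using cyc_iff q1 q2 by blast
    have nsc: "\<not> (q1 \<in> set (cyclist q2) \<and> q2 \<in> set (cyclist q1))" using ne cyc_eq_iff i12 i21 by blast
    have ty: "perm_type n y = mset (typel q1)" "perm_type n z = mset (typel q2)"
      using ptype_list q1 q2 Acg by auto
    have tne: "typel q1 \<noteq> typel q2" using cp nsc unfolding chkpair_def by auto
    have srt: "sorted (typel q1)" "sorted (typel q2)" unfolding typel_def by auto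
    have mne: "mset (typel q1) \<noteq> mset (typel q2)" using tne srt sorted_mset_eq by blast
    have "type_adj (mset (typel q1)) (mset (typel q2)) \<longleftrightarrow> (y \<in> cyc z \<or> z \<in> cyc y)"
    proof (cases "q1 \<in> set (cyclist q2)")
      case True
      define a where "a = idxof q1 (cyclist q2)"
      have "sort (typel q1) = sort (ppl (typel q2) a)" using cp nsc True unfolding chkpair_def a_def by auto
      hence e: "mset (typel q1) = part_pow (mset (typel q2)) a" using sort_eq_mset part_pow_mset by metis
      have "a \<noteq> 0" using idxof[OF True] cyclist0[OF q2(1) Acg[OF q2(1)]] q1(4) unfolding a_def by metis
      hence "type_adj (mset (typel q1)) (mset (typel q2))" unfolding type_adj_def using mne e by (metis One_nat_def Suc_leI gr0I)
      thus ?thesis using i12 True by blast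
    next
      case F1: False
      show ?thesis
      proof (cases "q2 \<in> set (cyclist q1)")
        case True
        define a where "a = idxof q2 (cyclist q1)"
        have "sort (typel q2) = sort (ppl (typel q1) a)" using cp nsc True F1 unfolding chkpair_def a_def by auto
        hence e: "mset (typel q2) = part_pow (mset (typel q1)) a" using sort_eq_mset part_pow_mset by metis
        have "a \<noteq> 0" using idxof[OF True] cyclist0[OF q1(1) Acg[OF q1(1)]] q2(4) unfolding a_def by metis
        hence "type_adj (mset (typel q1)) (mset (typel q2))" unfolding type_adj_def using mne e by (metis One_nat_def Suc_leI gr0I)
        thus ?thesis using i21 True by blast
      next
        case False
        have "\<not> divcover (typel q1) (typel q2) \<and> \<not> divcover (typel q2) (typel q1)"
          using cp nsc False F1 unfolding chkpair_def by auto
        hence "\<not> type_adj (mset (typel q1)) (mset (typel q2))"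
          unfolding type_adj_def using divcover_nec by metis
        thus ?thesis using i12 i21 F1 False by blast
      qed
    qed
    thus "perm_type n y \<noteq> perm_type n z \<and> (type_adj (perm_type n y) (perm_type n z) \<longleftrightarrow> (y \<in> cyc z \<or> z \<in> cyc y))"
      using ty mne by simp
  qed
qed

lemma checks5: "checkA 5 \<and> checkB 5 \<and> checkC 5" by code_simp
lemma checks4: "checkA 4 \<and> checkB 4 \<and> checkC 4" by code_simp
lemma checks3: "checkA 3 \<and> checkB 3 \<and> checkC 3" by code_simp
lemma checks2: "checkA 2 \<and> checkB 2 \<and> checkC 2" by code_simp




lemma ptype_conj:
  assumes s: "s \<in> sym_grp n" and ss: "\<And>x. s (s x) = x"
  shows "perm_type n (s \<circ> p \<circ> s) = perm_type n p"
proof -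
  have pw: "((s \<circ> p \<circ> s) ^^ k) i = s ((p ^^ k) (s i))" for k i
    by (induction k) (auto simp: ss)
  have orb: "orbit_of (s \<circ> p \<circ> s) i = s ` orbit_of p (s i)" for i
    unfolding orbit_of_def pw by auto
  have sp: "s permutes {..<n}" using s unfolding sym_grp_def by simp
  have simg: "s ` {..<n} = {..<n}" using permutes_image[OF sp] .
  have O: "orbit_of (s \<circ> p \<circ> s) ` {..<n} = (image s) ` (orbit_of p ` {..<n})"
  proof -
    have "orbit_of (s \<circ> p \<circ> s) ` {..<n} = (image s) ` (orbit_of p ` (s ` {..<n}))"
      unfolding orb by (auto simp: image_image)
    thus ?thesis using simg by simp
  qed
  have injs: "inj s" by (metis injI ss)
  have inj: "inj_on (image s) (orbit_of p ` {..<n})"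
    using injs by (simp add: inj_on_def inj_image_eq_iff)
  have "perm_type n (s \<circ> p \<circ> s) = image_mset card (image_mset (image s) (mset_set (orbit_of p ` {..<n})))"
    unfolding perm_type_def O using image_mset_mset_set[OF inj] by simp
  also have "\<dots> = image_mset (\<lambda>A. card (s ` A)) (mset_set (orbit_of p ` {..<n}))"
    by (simp add: image_mset.compositionality o_def)
  also have "\<dots> = perm_type n p"
    unfolding perm_type_def using injs by (simp add: card_image inj_on_subset)
  finally show ?thesis .
qed

lemma fn_snoc: "fn (l @ [length l]) = fn l"
  by (auto simp: fn_def fun_eq_iff nth_append)

lemma sym_mono: "x \<in> sym_grp m \<Longrightarrow> m \<le> n \<Longrightarrow> x \<in> sym_grp n"
  unfolding sym_grp_def by (auto intro: permutes_subset)

lemma pow3: "valid n l \<Longrightarrow> fn l ^^ 3 = fn (lc l (lc l l))"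
  using lc_valid by (simp add: numeral_3_eq_3)

lemma pow_fix: "f a = a \<Longrightarrow> (f ^^ k) a = a"
  by (induction k) auto

lemma upto6: "(i::nat) < 6 \<Longrightarrow> i = 0 \<or> i = 1 \<or> i = 2 \<or> i = 3 \<or> i = 4 \<or> i = 5"
  by arith

lemma not_iso_ge6:
  assumes n: "n \<ge> 6"
  shows "\<not> (\<forall>C \<in> graph_components (pg_verts n) pg_adj. graph_iso C pg_adj (types_of n C) type_adj)"
proof
  assume H: "\<forall>C \<in> graph_components (pg_verts n) pg_adj. graph_iso C pg_adj (types_of n C) type_adj"
  let ?S = "sym_grp n"
  let ?V = "pg_verts n"
  let ?R = "{(u, v). u \<in> ?V \<and> v \<in> ?V \<and> pg_adj u v}"
  define l1 where "l1 = [1,0,3,4,2::nat]"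
  define x1 where "x1 = fn l1"
  define x2 where "x2 = fn [1,0,3,5,4,2]"
  define t where "t = fn [1,0,2,3,4::nat]"
  define s where "s = fn [0,1,2,3,5,4::nat]"
  have v1: "valid 5 l1" unfolding l1_def valid_iff by code_simp
  have vt: "valid 5 [1,0,2,3,4]" unfolding valid_iff by code_simp
  have v2: "valid 6 [1,0,3,5,4,2]" unfolding valid_iff by code_simp
  have vs: "valid 6 [0,1,2,3,5,4]" unfolding valid_iff by code_simp
  have x1S: "x1 \<in> ?S" unfolding x1_def using fn_perm[OF v1] sym_mono n by simp
  have x2S: "x2 \<in> ?S" unfolding x2_def using fn_perm[OF v2] sym_mono n by simp
  have tS: "t \<in> ?S" unfolding t_def using fn_perm[OF vt] sym_mono n by simp
  have sS: "s \<in> ?S" unfolding s_def using fn_perm[OF vs] sym_mono n by simp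
  have x1nid: "x1 \<noteq> id" unfolding x1_def l1_def by (metis fn_def id_apply length_Cons list.size(3) nth_Cons_0 zero_less_Suc zero_neq_one)
  have x2nid: "x2 \<noteq> id" unfolding x2_def by (metis fn_def id_apply length_Cons list.size(3) nth_Cons_0 zero_less_Suc zero_neq_one)
  have tnid: "t \<noteq> id" unfolding t_def by (metis fn_def id_apply length_Cons list.size(3) nth_Cons_0 zero_less_Suc zero_neq_one)
  have t1: "t = x1 ^^ 3" unfolding x1_def t_def pow3[OF v1] unfolding l1_def lc_def by simp
  have t2: "t = x2 ^^ 3"
  proof -
    have "x2 ^^ 3 = fn [1,0,2,3,4,5]" unfolding x2_def pow3[OF v2] unfolding lc_def by simp
    also have "[1,0,2,3,4,5::nat] = [1,0,2,3,4] @ [length [1,0,2,3,4::nat]]" by simp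
    also have "fn \<dots> = t" unfolding t_def by (rule fn_snoc)
    finally show ?thesis by simp
  qed
  have conj: "x2 = s \<circ> x1 \<circ> s"
  proof
    fix i show "x2 i = (s \<circ> x1 \<circ> s) i"
    proof (cases "i < 6")
      case True
      then show ?thesis using upto6[OF True] unfolding x2_def s_def x1_def l1_def fn_def by auto
    next
      case False
      then show ?thesis unfolding x2_def s_def x1_def l1_def fn_def by auto
    qed
  qed
  have ss: "s (s i) = i" for i
  proof (cases "i < 6")
    case True
    then show ?thesis using upto6[OF True] unfolding s_def fn_def by auto
  next
    case False
    then show ?thesis unfolding s_def fn_def by auto
  qed
  have same: "perm_type n x2 = perm_type n x1" using ptype_conj[OF sS ss] conj by simp
  have tfix: "t 2 = 2" unfolding t_def fn_def by simp
  have x1m: "x1 2 = 3" "x1 4 = 2" unfolding x1_def l1_def fn_def by simp_all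
  have x2fix: "x2 4 = 4" unfolding x2_def fn_def by simp
  have c1: "cyc t \<noteq> cyc x1"
  proof
    assume "cyc t = cyc x1"
    hence "x1 \<in> cyc t" using cyc_self by blast
    then obtain k where "x1 = t ^^ k" unfolding cyc_def by blast
    thus False using pow_fix[of t 2 k, OF tfix] x1m by simp
  qed
  have c2: "cyc t \<noteq> cyc x2"
  proof
    assume "cyc t = cyc x2"
    hence "x2 \<in> cyc t" using cyc_self by blast
    then obtain k where "x2 = t ^^ k" unfolding cyc_def by blast
    moreover have "x2 2 = 3" unfolding x2_def fn_def by simp
    ultimately show False using pow_fix[of t 2 k, OF tfix] by simp
  qed
  have c12: "cyc x1 \<noteq> cyc x2"
  proof
    assume "cyc x1 = cyc x2"
    hence "x1 \<in> cyc x2" using cyc_self by blast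
    then obtain k where "x1 = x2 ^^ k" unfolding cyc_def by blast
    thus False using pow_fix[of x2 4 k, OF x2fix] x1m by simp
  qed
  have tin1: "t \<in> cyc x1" unfolding cyc_def t1 by blast
  have tin2: "t \<in> cyc x2" unfolding cyc_def t2 by blast
  have Vp: "pclass n x \<in> ?V" if "x \<in> ?S" "x \<noteq> id" for x using that pg_verts_iff by blast
  define X0 where "X0 = pclass n t"
  define C0 where "C0 = {Y \<in> ?V. (X0, Y) \<in> ?R\<^sup>*}"
  have C0comp: "C0 \<in> graph_components ?V pg_adj"
    unfolding graph_components_def C0_def X0_def using Vp[OF tS tnid] by blast
  have a1: "pg_adj (pclass n t) (pclass n x1)" using pg_adj_pclass[OF tS x1S tnid x1nid] c1 tin1 by blast
  have a2: "pg_adj (pclass n t) (pclass n x2)" using pg_adj_pclass[OF tS x2S tnid x2nid] c2 tin2 by blast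
  have in1: "pclass n x1 \<in> C0" unfolding C0_def X0_def using a1 Vp tS tnid x1S x1nid by blast
  have in2: "pclass n x2 \<in> C0" unfolding C0_def X0_def using a2 Vp tS tnid x2S x2nid by blast
  have neq: "pclass n x1 \<noteq> pclass n x2" using pclass_eq[OF x1S] c12 by blast
  have C0V: "C0 \<subseteq> ?V" unfolding C0_def by blast
  have finV: "finite ?V" unfolding pg_verts_def sym_grp_def using finite_permutations[of "{..<n}"] by simp
  have finC: "finite C0" using finite_subset[OF C0V finV] .
  from H C0comp have "graph_iso C0 pg_adj (types_of n C0) type_adj" by blast
  then obtain f where "bij_betw f C0 (types_of n C0)" unfolding graph_iso_def by blast
  hence cardeq: "card C0 = card (tyv n ` C0)" using bij_betw_same_card types_of_image[OF C0V] by metis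
  have "tyv n ` C0 = tyv n ` (C0 - {pclass n x2})"
  proof -
    have "tyv n (pclass n x2) = tyv n (pclass n x1)" using tyv_pclass x1S x2S same by simp
    thus ?thesis using in1 neq by blast
  qed
  hence "card (tyv n ` C0) \<le> card (C0 - {pclass n x2})" by (metis card_image_le finC finite_Diff)
  also have "\<dots> < card C0" using finC in2 by (meson card_Diff1_less)
  finally show False using cardeq by simp
qed

theorem corollary7p9:
  fixes n :: nat
  assumes "n \<ge> 2"
  shows "(\<forall>C \<in> graph_components (pg_verts n) pg_adj.
            graph_iso C pg_adj (types_of n C) type_adj)
         \<longleftrightarrow> n \<le> 5"
proof (cases "n \<le> 5")
  case True
  hence "n = 2 \<or> n = 3 \<or> n = 4 \<or> n = 5" using assms by arith
  hence "\<forall>C \<in> graph_components (pg_verts n) pg_adj. graph_iso C pg_adj (types_of n C) type_adj"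
    using per_n checks2 checks3 checks4 checks5 by blast
  thus ?thesis using True by blast
next
  case False
  thus ?thesis using not_iso_ge6[of n] by simp
qed


end
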